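(* Let $k$ be a field, $A=kQ_A/I_A$ a monomial algebra with vertices $e_1,\dots,e_n$, and $B$ the algebra obtained by gluing the distinct non-isolated vertices $e_1,e_n$. Assume that for every loop $\alpha$ at $e_1$ or $e_n$ with $\alpha^m\in Z_A$ for some $m\ge2$, $\mathrm{char}(k)\nmid m$. Then $\dim_k\mathrm{Ker}(\delta^1_B)=\dim_k\mathrm{Ker}(\delta^1_A)+\mathrm{kspp}(1,n)$.
   Context: Monomial algebra: $A=kQ_A/I_A$, $Q_A$ finite quiver, $I_A$ admissible, generated by a minimal set $Z_A$ of paths of length $\ge2$; $\mathcal B_A$: paths (including trivial ones) avoiding elements of $Z_A$ as subpaths. Gluing: $B\subseteq A$ generated by $f_1=e_1+e_n$, $f_i=e_i$ ($2\le i\le n-1$) and all arrows; $B\cong kQ_B/I_B$, $Q_B$ obtained by identifying $e_1,e_n$ to $f_1$ (arrow $\alpha\mapsto\alpha^*$, path $p=a_m\cdots a_1\mapsto p^*=a_m^*\cdots a_1^*$, $e_i^*=f_i$, $e_1^*=e_n^*=f_1$), $I_B$ generated by $Z_B=\{r^*:r\in Z_A\}\cup\{b^*c^*: b,c\text{ arrows},\ t(c),s(b)\in\{e_1,e_n\},\ t(c)\ne s(b)\}$; $\mathcal B_B$ its basis paths. For path sets $X,Y$, $k(X\|Y)$ has basis the pairs $x\|y$ of parallel paths. For monomial $\Lambda=kQ/\langle Z\rangle$ with basis paths $\mathcal B$, $\delta^1:k(Q_1\|\mathcal B)\to k(Z\|\mathcal B)$, $a\|\gamma\mapsto\sum_{r\in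 Z}r\|r^{a\|\gamma}$, where $r^{a\|\gamma}$ is the sum over occurrences of $a$ in $r$ of the path obtained by replacing that occurrence by $\gamma$, keeping only paths in $\mathcal B$; $\delta^1_A,\delta^1_B$ denote these for $A,B$. A special pair is $(\alpha,p)$ with $\alpha$ an arrow of $Q_A$ starting or ending at $e_1$ or $e_n$, $p\in\mathcal B_A$, $\alpha^*$ parallel to $p^*$ in $Q_B$, and $\alpha$ not parallel to $p$ in $Q_A$. $Z_{spp}$ is the intersection of $\mathrm{Ker}\,\delta^1_B$ with the span of all $\alpha^*\|p^*$ over special pairs, and $\mathrm{kspp}(1,n)=\dim_kZ_{spp}$. *)

theory Defs
  imports Complex_Main "HOL-Library.Sublist" "HOL-Library.Function_Algebras"
begin

text \<open>
A path is a pair (v, as): v is its starting vertex and as is its list of arrows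
in the order of traversal (so the paper's p = a_m ... a_1 is (s a_1, [a_1, ..., a_m])).
The trivial path e_v is (v, []).  Relations (elements of Z) are nonempty paths,
represented by their arrow lists.
\<close>

type_synonym 'a path = "nat \<times> 'a list"

definition is_path :: "nat set \<Rightarrow> 'a set \<Rightarrow> ('a \<Rightarrow> nat) \<Rightarrow> ('a \<Rightarrow> nat) \<Rightarrow> 'a path \<Rightarrow> bool" where
  "is_path V E s t x \<longleftrightarrow>
     fst x \<in> V \<and> set (snd x) \<subseteq> E \<and>
     (snd x \<noteq> [] \<longrightarrow> s (hd (snd x)) = fst x) \<and>
     (\<forall>i. Suc i < length (snd x) \<longrightarrow> t (snd x ! i) = s (snd x ! Suc i))"

definition pend :: "('a \<Rightarrow> nat) \<Rightarrow> 'a path \<Rightarrow> nat" where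
  "pend t x = (if snd x = [] then fst x else t (last (snd x)))"

text \<open>Monomial algebra data: finite quiver on vertices 1..n, Z a finite minimal set of
paths of length at least 2 generating an admissible ideal (every sufficiently long path
contains an element of Z as a subpath).\<close>

definition monomial_data :: "nat \<Rightarrow> 'a set \<Rightarrow> ('a \<Rightarrow> nat) \<Rightarrow> ('a \<Rightarrow> nat) \<Rightarrow> 'a list set \<Rightarrow> bool" where
  "monomial_data n E s t Z \<longleftrightarrow>
     finite E \<and> (\<forall>a\<in>E. s a \<in> {1..n} \<and> t a \<in> {1..n}) \<and>
     finite Z \<and>
     (\<forall>r\<in>Z. length r \<ge> 2 \<and> is_path {1..n} E s t (s (hd r), r)) \<and>
     (\<forall>r\<in>Z. \<forall>r'\<in>Z. sublist r r' \<longrightarrow> r = r') \<and>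
     (\<exists>N. \<forall>x. is_path {1..n} E s t x \<and> length (snd x) \<ge> N \<longrightarrow> (\<exists>r\<in>Z. sublist r (snd x)))"

definition basis_paths :: "nat set \<Rightarrow> 'a set \<Rightarrow> ('a \<Rightarrow> nat) \<Rightarrow> ('a \<Rightarrow> nat) \<Rightarrow> 'a list set \<Rightarrow> 'a path set" where
  "basis_paths V E s t Z = {x. is_path V E s t x \<and> (\<forall>r\<in>Z. \<not> sublist r (snd x))}"

text \<open>Basis of k(Q_1 || B): pairs (a, gamma) of an arrow and a parallel basis path.\<close>

definition par1 :: "nat set \<Rightarrow> 'a set \<Rightarrow> ('a \<Rightarrow> nat) \<Rightarrow> ('a \<Rightarrow> nat) \<Rightarrow> 'a list set \<Rightarrow> ('a \<times> 'a path) set" where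
  "par1 V E s t Z = {(a, g). a \<in> E \<and> g \<in> basis_paths V E s t Z \<and> s a = fst g \<and> t a = pend t g}"

text \<open>Elements of k(Q_1 || B), as coefficient functions supported on par1.\<close>

definition cochains1 :: "nat set \<Rightarrow> 'a set \<Rightarrow> ('a \<Rightarrow> nat) \<Rightarrow> ('a \<Rightarrow> nat) \<Rightarrow> 'a list set \<Rightarrow> ('a \<times> 'a path \<Rightarrow> 'k::field) set" where
  "cochains1 V E s t Z = {f. \<forall>x. x \<notin> par1 V E s t Z \<longrightarrow> f x = 0}"

definition replace_at :: "('a \<Rightarrow> nat) \<Rightarrow> 'a list \<Rightarrow> nat \<Rightarrow> 'a path \<Rightarrow> 'a path" where
  "replace_at s r i g = (s (hd r), take i r @ snd g @ drop (Suc i) r)"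

text \<open>delta^1 on k(Q_1 || B) with values in k(Z || B), the latter as coefficient functions of
pairs (r, q): the coefficient of r||q in delta^1(f) is the sum over basis pairs a||g of
f(a||g) times the number of occurrences of a in r whose replacement by g yields q,
q being a basis path.\<close>

definition delta1 :: "nat set \<Rightarrow> 'a set \<Rightarrow> ('a \<Rightarrow> nat) \<Rightarrow> ('a \<Rightarrow> nat) \<Rightarrow> 'a list set \<Rightarrow>
    ('a \<times> 'a path \<Rightarrow> 'k::field) \<Rightarrow> ('a list \<times> 'a path \<Rightarrow> 'k)" where
  "delta1 V E s t Z f = (\<lambda>(r, q).
     if r \<in> Z then
       (\<Sum>(a, g)\<in>par1 V E s t Z. f (a, g) *
          of_nat (card {i. i < length r \<and> r ! i = a \<and> replace_at s r i g = q \<and>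
                           q \<in> basis_paths V E s t Z}))
     else 0)"

definition ker_delta1 :: "nat set \<Rightarrow> 'a set \<Rightarrow> ('a \<Rightarrow> nat) \<Rightarrow> ('a \<Rightarrow> nat) \<Rightarrow> 'a list set \<Rightarrow>
    ('a \<times> 'a path \<Rightarrow> 'k::field) set" where
  "ker_delta1 V E s t Z = {f \<in> cochains1 V E s t Z. delta1 V E s t Z f = (\<lambda>_. 0)}"

definition fscale :: "'k::field \<Rightarrow> ('b \<Rightarrow> 'k) \<Rightarrow> ('b \<Rightarrow> 'k)" where
  "fscale c f = (\<lambda>x. c * f x)"

abbreviation kdim :: "('b \<Rightarrow> 'k::field) set \<Rightarrow> nat" where
  "kdim S \<equiv> vector_space.dim fscale S"

abbreviation kspan :: "('b \<Rightarrow> 'k::field) set \<Rightarrow> ('b \<Rightarrow> 'k) set" where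
  "kspan S \<equiv> module.span fscale S"

text \<open>Gluing e_1 and e_n: the identification map on vertices; Q_B has vertices 1..n-1,
the same arrows, source phi o s and target phi o t.\<close>

definition glue :: "nat \<Rightarrow> nat \<Rightarrow> nat" where
  "glue n v = (if v = n then 1 else v)"

text \<open>Z_B: the relations r* for r in Z_A together with b*c* (traversal: c then b) for arrows
b, c with t(c), s(b) in {e_1, e_n} and t(c) distinct from s(b).\<close>

definition glued_Z :: "nat \<Rightarrow> 'a set \<Rightarrow> ('a \<Rightarrow> nat) \<Rightarrow> ('a \<Rightarrow> nat) \<Rightarrow> 'a list set \<Rightarrow> 'a list set" where
  "glued_Z n E s t Z = Z \<union>
     {[c, b] | b c. b \<in> E \<and> c \<in> E \<and> t c \<in> {1, n} \<and> s b \<in> {1, n} \<and> t c \<noteq> s b}"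

definition path_star :: "nat \<Rightarrow> 'a path \<Rightarrow> 'a path" where
  "path_star n p = (glue n (fst p), snd p)"

definition special_pair :: "nat \<Rightarrow> 'a set \<Rightarrow> ('a \<Rightarrow> nat) \<Rightarrow> ('a \<Rightarrow> nat) \<Rightarrow> 'a list set \<Rightarrow> 'a \<Rightarrow> 'a path \<Rightarrow> bool" where
  "special_pair n E s t Z \<alpha> p \<longleftrightarrow>
     \<alpha> \<in> E \<and> (s \<alpha> \<in> {1, n} \<or> t \<alpha> \<in> {1, n}) \<and>
     p \<in> basis_paths {1..n} E s t Z \<and>
     glue n (s \<alpha>) = glue n (fst p) \<and> glue n (t \<alpha>) = glue n (pend t p) \<and>
     \<not> (s \<alpha> = fst p \<and> t \<alpha> = pend t p)"

definition kspp :: "'k::field itself \<Rightarrow> nat \<Rightarrow> 'a set \<Rightarrow> ('a \<Rightarrow> nat) \<Rightarrow> ('a \<Rightarrow> nat) \<Rightarrow> 'a list set \<Rightarrow> nat" where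
  "kspp _ n E s t Z =
     kdim (ker_delta1 {1..n-1} E (glue n \<circ> s) (glue n \<circ> t) (glued_Z n E s t Z) \<inter>
           kspan {(\<lambda>x. if x = (\<alpha>, path_star n p) then 1 else 0) :: 'a \<times> 'a path \<Rightarrow> 'k
                  | \<alpha> p. special_pair n E s t Z \<alpha> p})"

end

theory Submission
  imports Defs
begin

lemma fscale_vs: "vector_space (fscale :: 'k::field \<Rightarrow> ('b \<Rightarrow> 'k) \<Rightarrow> ('b \<Rightarrow> 'k))"
  by unfold_locales (auto simp: fscale_def fun_eq_iff algebra_simps)

interpretation fs: vector_space "fscale :: 'k::field \<Rightarrow> ('b \<Rightarrow> 'k) \<Rightarrow> ('b \<Rightarrow> 'k)"
  by (rule fscale_vs)

definition ind :: "'b \<Rightarrow> 'b \<Rightarrow> 'k::field" where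
  "ind x = (\<lambda>y. if y = x then 1 else 0)"

lemma sum_fun_apply': "(sum f A) y = (\<Sum>x\<in>A. f x y)"
  by (induction A rule: infinite_finite_induct) auto

lemma span_ind:
  assumes "finite X"
  shows "fs.span (ind ` X :: ('b \<Rightarrow> 'k::field) set) = {f. \<forall>y. y \<notin> X \<longrightarrow> f y = 0}"
proof
  have "fs.subspace {f :: 'b \<Rightarrow> 'k. \<forall>y. y \<notin> X \<longrightarrow> f y = 0}"
    by (auto simp: fs.subspace_def fscale_def)
  then show "fs.span (ind ` X) \<subseteq> {f :: 'b \<Rightarrow> 'k. \<forall>y. y \<notin> X \<longrightarrow> f y = 0}"
    by (intro fs.span_minimal) (auto simp: ind_def)
next
  show "{f :: 'b \<Rightarrow> 'k. \<forall>y. y \<notin> X \<longrightarrow> f y = 0} \<subseteq> fs.span (ind ` X)"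
  proof
    fix f :: "'b \<Rightarrow> 'k" assume f: "f \<in> {f. \<forall>y. y \<notin> X \<longrightarrow> f y = 0}"
    have "f = (\<Sum>x\<in>X. fscale (f x) (ind x))"
    proof
      fix y
      show "f y = (\<Sum>x\<in>X. fscale (f x) (ind x)) y"
      proof -
        have "(\<Sum>x\<in>X. f x * (if y = x then 1 else 0)) = (\<Sum>x\<in>X. if y = x then f y else 0)"
          by (rule sum.cong) auto
        then show ?thesis
          using f assms by (simp add: sum_fun_apply' fscale_def ind_def)
      qed
    qed
    also have "\<dots> \<in> fs.span (ind ` X)"
      by (intro fs.span_sum fs.span_scale fs.span_base) auto
    finally show "f \<in> fs.span (ind ` X)" .
  qed
qed



definition apath :: "'a set \<Rightarrow> ('a \<Rightarrow> nat) \<Rightarrow> ('a \<Rightarrow> nat) \<Rightarrow> 'a list \<Rightarrow> bool" where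
  "apath E s t w \<longleftrightarrow> set w \<subseteq> E \<and> (\<forall>i. Suc i < length w \<longrightarrow> t (w!i) = s (w ! Suc i))"

lemma is_path_apath: "is_path V E s t x \<longleftrightarrow>
   fst x \<in> V \<and> apath E s t (snd x) \<and> (snd x \<noteq> [] \<longrightarrow> s (hd (snd x)) = fst x)"
  by (auto simp: is_path_def apath_def)

lemma apath_Nil[simp]: "apath E s t []"
  by (simp add: apath_def)

lemma apath_Cons: "apath E s t (a # w) \<longleftrightarrow> a \<in> E \<and> apath E s t w \<and> (w \<noteq> [] \<longrightarrow> t a = s (hd w))"
proof
  assume h: "apath E s t (a # w)"
  have "w \<noteq> [] \<longrightarrow> t a = s (hd w)"
    using h[unfolded apath_def] by (cases w) fastforce+
  moreover have "apath E s t w"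
    unfolding apath_def
  proof (intro conjI allI impI)
    show "set w \<subseteq> E" using h by (auto simp: apath_def)
    fix i assume "Suc i < length w"
    then show "t (w ! i) = s (w ! Suc i)"
      using h[unfolded apath_def] by (metis Suc_less_eq length_Cons nth_Cons_Suc)
  qed
  ultimately show "a \<in> E \<and> apath E s t w \<and> (w \<noteq> [] \<longrightarrow> t a = s (hd w))"
    using h by (auto simp: apath_def)
next
  assume h: "a \<in> E \<and> apath E s t w \<and> (w \<noteq> [] \<longrightarrow> t a = s (hd w))"
  show "apath E s t (a # w)"
    unfolding apath_def
  proof (intro conjI allI impI)
    show "set (a # w) \<subseteq> E" using h by (auto simp: apath_def)
    fix i assume i: "Suc i < length (a # w)"
    show "t ((a # w) ! i) = s ((a # w) ! Suc i)"
    proof (cases i)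
      case 0
      then show ?thesis using h i by (cases w) auto
    next
      case (Suc j)
      then show ?thesis using h i by (auto simp: apath_def)
    qed
  qed
qed

lemma apath_append: "apath E s t (xs @ ys) \<longleftrightarrow>
   apath E s t xs \<and> apath E s t ys \<and> (xs \<noteq> [] \<and> ys \<noteq> [] \<longrightarrow> t (last xs) = s (hd ys))"
  by (induction xs) (auto simp: apath_Cons)

lemma apath_sublist2: "apath E s t w \<Longrightarrow> sublist [c, b] w \<Longrightarrow> t c = s b"
  by (auto simp: sublist_def apath_append apath_Cons)

lemma sublist_replicate: "sublist xs (replicate N a) \<Longrightarrow> xs = replicate (length xs) a"
proof -
  assume "sublist xs (replicate N a)"
  then obtain ps ss where "replicate N a = ps @ xs @ ss" by (auto simp: sublist_def)
  then have "set xs \<subseteq> set (replicate N a)" by (metis Un_iff set_append subsetI)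
  then have "set xs \<subseteq> {a}" by auto
  then show ?thesis
    by (metis replicate_length_same singletonD subset_iff)
qed

lemma apath_replicate: "a \<in> E \<Longrightarrow> s a = t a \<Longrightarrow> apath E s t (replicate N a)"
  by (induction N) (auto simp: apath_Cons)



lemma delta1_add: "delta1 V E s t Z (\<lambda>x. f x + g x) = (\<lambda>x. delta1 V E s t Z f x + delta1 V E s t Z g x)"
  by (auto simp: delta1_def fun_eq_iff sum.distrib distrib_right case_prod_unfold split: prod.splits)

lemma delta1_scale: "delta1 V E s t Z (\<lambda>x. c * f x) = (\<lambda>x. c * delta1 V E s t Z f x)"
  by (auto simp: delta1_def fun_eq_iff sum_distrib_left mult.assoc case_prod_unfold split: prod.splits)

lemma ker_subspace: "fs.subspace (ker_delta1 V E s t Z :: ('a \<times> 'a path \<Rightarrow> 'k::field) set)"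
proof -
  have z: "delta1 V E s t Z (\<lambda>x. 0::'k) = (\<lambda>_. 0)"
    by (auto simp: delta1_def fun_eq_iff split: prod.splits)
  show ?thesis
    unfolding fs.subspace_def ker_delta1_def cochains1_def
  proof (intro conjI ballI allI)
    show "(0::'a \<times> 'a path \<Rightarrow> 'k) \<in> {f \<in> {f. \<forall>x. x \<notin> par1 V E s t Z \<longrightarrow> f x = 0}. delta1 V E s t Z f = (\<lambda>_. 0)}"
      using z by (simp add: zero_fun_def)
  next
    fix x y :: "'a \<times> 'a path \<Rightarrow> 'k"
    assume x: "x \<in> {f \<in> {f. \<forall>x. x \<notin> par1 V E s t Z \<longrightarrow> f x = 0}. delta1 V E s t Z f = (\<lambda>_. 0)}"
      and y: "y \<in> {f \<in> {f. \<forall>x. x \<notin> par1 V E s t Z \<longrightarrow> f x = 0}. delta1 V E s t Z f = (\<lambda>_. 0)}"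
    have "delta1 V E s t Z (x + y) = delta1 V E s t Z (\<lambda>z. x z + y z)"
      by (simp add: plus_fun_def)
    also have "\<dots> = (\<lambda>_. 0)" using x y by (simp add: delta1_add)
    finally show "x + y \<in> {f \<in> {f. \<forall>x. x \<notin> par1 V E s t Z \<longrightarrow> f x = 0}. delta1 V E s t Z f = (\<lambda>_. 0)}"
      using x y by auto
  next
    fix c :: 'k and x :: "'a \<times> 'a path \<Rightarrow> 'k"
    assume x: "x \<in> {f \<in> {f. \<forall>x. x \<notin> par1 V E s t Z \<longrightarrow> f x = 0}. delta1 V E s t Z f = (\<lambda>_. 0)}"
    then show "fscale c x \<in> {f \<in> {f. \<forall>x. x \<notin> par1 V E s t Z \<longrightarrow> f x = 0}. delta1 V E s t Z f = (\<lambda>_. 0)}"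
      by (auto simp: fscale_def delta1_scale)
  qed
qed

lemma replace_at_len: "i < length r \<Longrightarrow> length (snd (replace_at s r i g)) = length r - 1 + length (snd g)"
  by (simp add: replace_at_def)

lemma ker_loop_zero:
  fixes f :: "'a \<times> 'a path \<Rightarrow> 'k::field"
  assumes f: "f \<in> ker_delta1 V E s t Z" and r: "replicate m \<alpha> \<in> Z" and m: "2 \<le> m"
    and b: "(s \<alpha>, replicate (m-1) \<alpha>) \<in> basis_paths V E s t Z"
    and nz: "(of_nat m :: 'k) \<noteq> 0" and fin: "finite (par1 V E s t Z)"
  shows "f (\<alpha>, (s \<alpha>, [])) = 0"
proof (cases "(\<alpha>, (s \<alpha>, [])) \<in> par1 V E s t Z")
  case False
  then show ?thesis using f by (auto simp: ker_delta1_def cochains1_def)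
next
  case True
  let ?r = "replicate m \<alpha>" and ?q = "(s \<alpha>, replicate (m-1) \<alpha>)"
  let ?x0 = "(\<alpha>, (s \<alpha>, [])) :: 'a \<times> 'a path"
  let ?C = "\<lambda>a g. {i. i < length ?r \<and> ?r ! i = a \<and> replace_at s ?r i g = ?q \<and> ?q \<in> basis_paths V E s t Z}"
  have C0: "?C a g = {}" if ag: "(a, g) \<in> par1 V E s t Z" "(a, g) \<noteq> ?x0" for a g
  proof (rule ccontr)
    assume "?C a g \<noteq> {}"
    then obtain i where i: "i < m" "?r ! i = a" "replace_at s ?r i g = ?q" by auto
    have "a = \<alpha>" using i by simp
    have l1: "length (snd (replace_at s ?r i g)) = m - 1 + length (snd g)"
      using i(1) by (simp add: replace_at_len)
    have l2: "length (snd (replace_at s ?r i g)) = m - 1"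
      using i(3) by simp
    from l1 l2 have "length (snd g) = 0" by linarith
    then have "snd g = []" by simp
    moreover have "fst g = s a" using ag by (auto simp: par1_def)
    ultimately have "g = (s \<alpha>, [])" using \<open>a = \<alpha>\<close> by (metis prod.collapse)
    then show False using ag \<open>a = \<alpha>\<close> by simp
  qed
  have C1: "?C \<alpha> (s \<alpha>, []) = {..<m}"
  proof -
    have "replace_at s ?r i (s \<alpha>, []) = ?q" if "i < m" for i
      using that m by (auto simp: replace_at_def min_def replicate_add[symmetric])
    then show ?thesis using b by auto
  qed
  have "delta1 V E s t Z f (?r, ?q) = 0" using f by (auto simp: ker_delta1_def)
  moreover have "delta1 V E s t Z f (?r, ?q) =
      (\<Sum>(a, g)\<in>par1 V E s t Z. f (a, g) * of_nat (card (?C a g)))"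
    using r by (simp add: delta1_def)
  moreover have "\<dots> = (\<Sum>x\<in>par1 V E s t Z. if x = ?x0 then f ?x0 * of_nat m else 0)"
  proof (rule sum.cong)
    fix x assume x: "x \<in> par1 V E s t Z"
    obtain a g where xag: "x = (a, g)" by (cases x)
    show "(case x of (a, g) \<Rightarrow> f (a, g) * of_nat (card (?C a g))) = (if x = ?x0 then f ?x0 * of_nat m else 0)"
    proof (cases "x = ?x0")
      case True
      then show ?thesis unfolding True prod.case C1 by simp
    next
      case False
      have e: "?C a g = {}" by (rule C0) (use x xag False in auto)
      show ?thesis unfolding xag prod.case by (simp only: e) (use False xag in auto)
    qed
  qed simp
  moreover have "\<dots> = f ?x0 * of_nat m"
  proof -
    show ?thesis using True fin by (simp add: sum.delta')
  qed
  ultimately show ?thesis using nz by simp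
qed



locale gl =
  fixes n :: nat and E :: "'a set" and s t :: "'a \<Rightarrow> nat" and Z :: "'a list set"
  assumes mono: "monomial_data n E s t Z" and n2: "2 \<le> n"
begin

abbreviation "sB \<equiv> glue n \<circ> s"
abbreviation "tB \<equiv> glue n \<circ> t"
abbreviation "ZB \<equiv> glued_Z n E s t Z"
abbreviation "BA \<equiv> basis_paths {1..n} E s t Z"
abbreviation "BB \<equiv> basis_paths {1..n-1} E sB tB ZB"
abbreviation "PA \<equiv> par1 {1..n} E s t Z"
abbreviation "PB \<equiv> par1 {1..n-1} E sB tB ZB"

definition lft :: "'a \<Rightarrow> 'a path \<Rightarrow> 'a path" where
  "lft a q = (if snd q = [] then s a else s (hd (snd q)), snd q)"

lemma glue_range: "v \<in> {1..n} \<Longrightarrow> glue n v \<in> {1..n-1}"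
  using n2 by (auto simp: glue_def)

lemma glue_eq: "v \<in> {1..n} \<Longrightarrow> w \<in> {1..n} \<Longrightarrow> glue n v = glue n w \<Longrightarrow> v \<noteq> w \<Longrightarrow> v \<in> {1, n} \<and> w \<in> {1, n}"
  by (auto simp: glue_def split: if_splits)

lemma glue_1n: "v \<in> {1, n} \<Longrightarrow> glue n v = 1"
  by (auto simp: glue_def)

lemma E_st: "a \<in> E \<Longrightarrow> s a \<in> {1..n} \<and> t a \<in> {1..n}"
  using mono by (auto simp: monomial_data_def)

lemma Z_props: "r \<in> Z \<Longrightarrow> 2 \<le> length r \<and> apath E s t r"
  using mono by (auto simp: monomial_data_def is_path_apath)

lemma Nil_notin_Z: "[] \<notin> Z"
  using Z_props by fastforce

lemma Z_min: "r \<in> Z \<Longrightarrow> r' \<in> Z \<Longrightarrow> sublist r r' \<Longrightarrow> r = r'"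
  using mono by (auto simp: monomial_data_def)

lemma Z_sub_ZB: "Z \<subseteq> ZB"
  by (auto simp: glued_Z_def)

lemma ZB_cases: "r \<in> ZB \<Longrightarrow> r \<in> Z \<or> (\<exists>b c. r = [c, b] \<and> b \<in> E \<and> c \<in> E \<and> t c \<in> {1, n} \<and> s b \<in> {1, n} \<and> t c \<noteq> s b)"
  by (auto simp: glued_Z_def)

lemma bad_in_ZB: "b \<in> E \<Longrightarrow> c \<in> E \<Longrightarrow> t c \<in> {1, n} \<Longrightarrow> s b \<in> {1, n} \<Longrightarrow> t c \<noteq> s b \<Longrightarrow> [c, b] \<in> ZB"
  by (auto simp: glued_Z_def)

lemma apathB_to_A:
  assumes "apath E sB tB w" "\<And>r. r \<in> ZB \<Longrightarrow> \<not> sublist r w"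
  shows "apath E s t w"
  using assms
proof (induction w)
  case Nil
  then show ?case by simp
next
  case (Cons a w)
  have "a \<in> E \<and> apath E sB tB w \<and> (w \<noteq> [] \<longrightarrow> tB a = sB (hd w))"
    using apath_Cons[THEN iffD1, OF Cons.prems(1)] .
  then have a: "a \<in> E" "apath E sB tB w" "w \<noteq> [] \<longrightarrow> tB a = sB (hd w)"
    by blast+
  have IH: "apath E s t w"
    using Cons.IH[OF a(2)] Cons.prems(2) by (meson sublist_Cons_right)
  have "t a = s (hd w)" if w: "w \<noteq> []"
  proof (rule ccontr)
    assume ne: "t a \<noteq> s (hd w)"
    have hw: "hd w \<in> E" using a(2) w by (cases w) (auto simp: apath_Cons)
    have "glue n (t a) = glue n (s (hd w))" using a(3) w by simp
    then have "t a \<in> {1, n} \<and> s (hd w) \<in> {1, n}"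
      using glue_eq E_st[OF a(1)] E_st[OF hw] ne by blast
    then have "[a, hd w] \<in> ZB" using bad_in_ZB[OF hw a(1)] ne by auto
    moreover have "sublist [a, hd w] (a # w)"
      using w by (cases w) (auto simp: sublist_def intro: exI[of _ "[]"])
    ultimately show False using Cons.prems(2) by blast
  qed
  then show ?case using a(1) IH by (simp add: apath_Cons)
qed

lemma BB_apath: "x \<in> BB \<Longrightarrow> apath E s t (snd x)"
  by (rule apathB_to_A) (auto simp: basis_paths_def is_path_apath)

lemma BA_path: "p \<in> BA \<Longrightarrow> fst p \<in> {1..n} \<and> apath E s t (snd p) \<and> (snd p \<noteq> [] \<longrightarrow> s (hd (snd p)) = fst p) \<and> (\<forall>r\<in>Z. \<not> sublist r (snd p))"
  by (auto simp: basis_paths_def is_path_apath)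

lemma apath_pend: "apath E s t w \<Longrightarrow> w \<noteq> [] \<Longrightarrow> t (last w) \<in> {1..n} \<and> s (hd w) \<in> {1..n}"
proof -
  assume "apath E s t w" "w \<noteq> []"
  then have "last w \<in> E" "hd w \<in> E" using last_in_set[of w] hd_in_set[of w] by (auto simp: apath_def)
  then show ?thesis using E_st by blast
qed

lemma pend_range: "p \<in> BA \<Longrightarrow> pend t p \<in> {1..n}"
  using BA_path[of p] apath_pend[of "snd p"] by (auto simp: pend_def)

lemma path_star_BB:
  assumes p: "p \<in> BA" shows "path_star n p \<in> BB"
proof -
  have p1: "fst p \<in> {1..n}" "apath E s t (snd p)" "snd p \<noteq> [] \<longrightarrow> s (hd (snd p)) = fst p"
    "\<forall>r\<in>Z. \<not> sublist r (snd p)" using BA_path[OF p] by auto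
  have "apath E sB tB (snd p)"
    using p1(2) unfolding apath_def by auto
  moreover have "\<not> sublist r (snd p)" if r: "r \<in> ZB" for r
    using ZB_cases[OF r]
  proof
    assume "r \<in> Z" then show ?thesis using p1(4) by auto
  next
    assume "\<exists>b c. r = [c, b] \<and> b \<in> E \<and> c \<in> E \<and> t c \<in> {1, n} \<and> s b \<in> {1, n} \<and> t c \<noteq> s b"
    then show ?thesis using apath_sublist2[OF p1(2)] by blast
  qed
  ultimately show ?thesis
    using p1 glue_range[OF p1(1)]
    by (auto simp: basis_paths_def is_path_apath path_star_def)
qed

lemma pend_star: "pend tB (path_star n p) = glue n (pend t p)"
  by (auto simp: pend_def path_star_def)

lemma PA_PB: "(a, p) \<in> PA \<Longrightarrow> (a, path_star n p) \<in> PB"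
  using path_star_BB by (auto simp: par1_def pend_def path_star_def)

lemma lft_props:
  assumes aq: "(a, q) \<in> PB"
  shows "lft a q \<in> BA" "path_star n (lft a q) = q" "glue n (s a) = glue n (fst (lft a q))"
    "glue n (t a) = glue n (pend t (lft a q))" "snd (lft a q) = snd q"
proof -
  have a: "a \<in> E" and q: "q \<in> BB" and sq: "glue n (s a) = fst q" and tq: "glue n (t a) = pend tB q"
    using aq by (auto simp: par1_def)
  have qB: "fst q \<in> {1..n-1}" "apath E sB tB (snd q)" "snd q \<noteq> [] \<longrightarrow> sB (hd (snd q)) = fst q"
    "\<forall>r\<in>ZB. \<not> sublist r (snd q)"
    using q by (auto simp: basis_paths_def is_path_apath)
  have qA: "apath E s t (snd q)" using BB_apath[OF q] .
  show "snd (lft a q) = snd q" by (simp add: lft_def)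
  show "lft a q \<in> BA"
  proof (cases "snd q = []")
    case True
    then show ?thesis using E_st[OF a] Nil_notin_Z by (auto simp: lft_def basis_paths_def is_path_apath)
  next
    case False
    then have "hd (snd q) \<in> E" using qA by (cases "snd q") (auto simp: apath_Cons)
    then show ?thesis using False E_st qA qB(4) Z_sub_ZB
      by (auto simp: lft_def basis_paths_def is_path_apath)
  qed
  show "path_star n (lft a q) = q"
    using sq qB(3) by (cases q) (auto simp: lft_def path_star_def)
  show "glue n (s a) = glue n (fst (lft a q))"
    using sq qB(3) by (auto simp: lft_def)
  show "glue n (t a) = glue n (pend t (lft a q))"
    using tq sq by (auto simp: lft_def pend_def)
qed

end


context gl begin

lemma admiss: "\<exists>N. \<forall>x. is_path {1..n} E s t x \<and> length (snd x) \<ge> N \<longrightarrow> (\<exists>r\<in>Z. sublist r (snd x))"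
  using mono by (auto simp: monomial_data_def)

lemma finE: "finite E"
  using mono by (auto simp: monomial_data_def)

lemma BA_fin: "finite BA"
proof -
  obtain N where N: "\<And>x. is_path {1..n} E s t x \<Longrightarrow> length (snd x) \<ge> N \<Longrightarrow> \<exists>r\<in>Z. sublist r (snd x)"
    using admiss by blast
  have "BA \<subseteq> {1..n} \<times> {w. set w \<subseteq> E \<and> length w \<le> N}"
  proof
    fix x assume x: "x \<in> BA"
    have "\<not> length (snd x) \<ge> N"
    proof
      assume "length (snd x) \<ge> N"
      moreover have "is_path {1..n} E s t x" using x by (auto simp: basis_paths_def)
      ultimately have "\<exists>r\<in>Z. sublist r (snd x)" using N by blast
      then show False using x by (auto simp: basis_paths_def)
    qed
    then show "x \<in> {1..n} \<times> {w. set w \<subseteq> E \<and> length w \<le> N}"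
      using x by (cases x) (auto simp: basis_paths_def is_path_def)
  qed
  moreover have "finite ({1..n} \<times> {w. set w \<subseteq> E \<and> length w \<le> N})"
    using finE by (intro finite_cartesian_product finite_lists_length_le) auto
  ultimately show ?thesis by (rule finite_subset)
qed

lemma BB_fin: "finite BB"
proof -
  obtain N where N: "\<And>x. is_path {1..n} E s t x \<Longrightarrow> length (snd x) \<ge> N \<Longrightarrow> \<exists>r\<in>Z. sublist r (snd x)"
    using admiss by blast
  have "BB \<subseteq> {1..n-1} \<times> {w. set w \<subseteq> E \<and> length w \<le> N}"
  proof
    fix x assume x: "x \<in> BB"
    have ap: "apath E s t (snd x)" using BB_apath[OF x] .
    have "length (snd x) \<le> N"
    proof (rule ccontr)
      assume l: "\<not> length (snd x) \<le> N"
      then have ne: "snd x \<noteq> []" by auto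
      have "is_path {1..n} E s t (s (hd (snd x)), snd x)"
        using ap apath_pend[OF ap ne] by (auto simp: is_path_apath)
      then obtain r where "r \<in> Z" "sublist r (snd x)" using N[of "(s (hd (snd x)), snd x)"] l by auto
      then show False using x Z_sub_ZB by (auto simp: basis_paths_def)
    qed
    then show "x \<in> {1..n-1} \<times> {w. set w \<subseteq> E \<and> length w \<le> N}"
      using x by (cases x) (auto simp: basis_paths_def is_path_def)
  qed
  moreover have "finite ({1..n-1} \<times> {w. set w \<subseteq> E \<and> length w \<le> N})"
    using finE by (intro finite_cartesian_product finite_lists_length_le) auto
  ultimately show ?thesis by (rule finite_subset)
qed

lemma PA_fin: "finite PA"
proof (rule finite_subset[of _ "E \<times> BA"])
  show "PA \<subseteq> E \<times> BA" by (auto simp: par1_def)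
  show "finite (E \<times> BA)" using finE BA_fin by simp
qed

lemma PB_fin: "finite PB"
proof (rule finite_subset[of _ "E \<times> BB"])
  show "PB \<subseteq> E \<times> BB" by (auto simp: par1_def)
  show "finite (E \<times> BB)" using finE BB_fin by simp
qed

definition SP :: "('a \<times> 'a path) set" where
  "SP = {(\<alpha>, path_star n p) | \<alpha> p. special_pair n E s t Z \<alpha> p}"

lemma SPI: "special_pair n E s t Z \<alpha> p \<Longrightarrow> q = path_star n p \<Longrightarrow> (\<alpha>, q) \<in> SP"
  unfolding SP_def by (cases p) blast

lemma SP_sub: "SP \<subseteq> PB"
proof
  fix x assume "x \<in> SP"
  then obtain \<alpha> p where x: "x = (\<alpha>, path_star n p)" and sp: "special_pair n E s t Z \<alpha> p"
    unfolding SP_def by blast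
  have h: "\<alpha> \<in> E" "p \<in> BA" "glue n (s \<alpha>) = glue n (fst p)" "glue n (t \<alpha>) = glue n (pend t p)"
    using sp unfolding special_pair_def by blast+
  have "path_star n p \<in> BB" using path_star_BB[OF h(2)] .
  moreover have "sB \<alpha> = fst (path_star n p)" using h(3) by (simp add: path_star_def)
  moreover have "tB \<alpha> = pend tB (path_star n p)" using h(4) by (simp add: pend_star)
  ultimately show "x \<in> PB" using x h(1) unfolding par1_def by blast
qed

lemma SP_fin: "finite SP"
  using SP_sub PB_fin by (rule finite_subset)

lemma O_SP:
  assumes "\<alpha> \<in> E" "s \<alpha> = t \<alpha>" "s \<alpha> \<in> {1, n}"
  shows "(\<alpha>, (1, [])) \<in> SP"
proof -
  define v where "v = (if s \<alpha> = 1 then n else 1)"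
  have v: "v \<in> {1..n}" "v \<in> {1, n}" "v \<noteq> s \<alpha>" using n2 assms by (auto simp: v_def)
  have "(v, []) \<in> BA" using v Nil_notin_Z by (auto simp: basis_paths_def is_path_def)
  then have "special_pair n E s t Z \<alpha> (v, [])"
    using assms v glue_1n by (auto simp: special_pair_def pend_def)
  moreover have "path_star n (v, []) = (1, [])" using v glue_1n by (simp add: path_star_def)
  ultimately show ?thesis by (metis SPI)
qed

lemma classify:
  assumes aq: "(a, q) \<in> PB" and nS: "(a, q) \<notin> SP"
  shows "(a, lft a q) \<in> PA"
proof -
  note L = lft_props[OF aq]
  have a: "a \<in> E" using aq by (auto simp: par1_def)
  show ?thesis
  proof (rule ccontr)
    assume nA: "(a, lft a q) \<notin> PA"
    then have np: "\<not> (s a = fst (lft a q) \<and> t a = pend t (lft a q))"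
      using a L(1) by (auto simp: par1_def)
    have "s a \<in> {1, n} \<or> t a \<in> {1, n}"
      using np glue_eq E_st[OF a] BA_path[OF L(1)] pend_range[OF L(1)] L(3) L(4) by metis
    then have "special_pair n E s t Z a (lft a q)"
      using a L np by (auto simp: special_pair_def)
    then have "(a, q) \<in> SP" using L(2) by (metis SPI)
    then show False using nS by simp
  qed
qed

lemma PA_SP:
  assumes ap: "(a, p) \<in> PA" and S: "(a, path_star n p) \<in> SP"
  shows "snd p = [] \<and> s a = t a \<and> s a \<in> {1, n}"
proof -
  obtain p' where sp: "special_pair n E s t Z a p'" and eq: "path_star n p = path_star n p'"
    using S unfolding SP_def by auto
  have pp: "s a = fst p" "t a = pend t p" "p \<in> BA" "a \<in> E" using ap by (auto simp: par1_def)
  have p': "p' \<in> BA" "glue n (s a) = glue n (fst p')" "glue n (t a) = glue n (pend t p')"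
    "\<not> (s a = fst p' \<and> t a = pend t p')" using sp by (auto simp: special_pair_def)
  have sn: "snd p = snd p'" using eq by (simp add: path_star_def)
  show ?thesis
  proof (cases "snd p = []")
    case False
    then have "fst p = fst p'" using sn BA_path[OF pp(3)] BA_path[OF p'(1)] by metis
    then have "p = p'" using sn by (simp add: prod_eq_iff)
    then show ?thesis using pp p' by simp
  next
    case True
    then have "s a = t a" using pp by (simp add: pend_def)
    moreover have "snd p' = []" using True sn by simp
    ultimately have "s a \<noteq> fst p'" using p'(4) by (simp add: pend_def)
    then have "s a \<in> {1, n}" using glue_eq E_st[OF pp(4)] BA_path[OF p'(1)] p'(2) by metis
    then show ?thesis using True \<open>s a = t a\<close> by simp
  qed
qed

lemma lft_star:
  assumes ap: "(a, p) \<in> PA" shows "lft a (path_star n p) = p"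
proof -
  have pp: "s a = fst p" "t a = pend t p" "p \<in> BA" using ap by (auto simp: par1_def)
  show ?thesis using pp BA_path[OF pp(3)] by (cases p) (auto simp: lft_def path_star_def)
qed

lemma loop_rel:
  assumes a: "\<alpha> \<in> E" "s \<alpha> = t \<alpha>"
  shows "\<exists>m. 2 \<le> m \<and> replicate m \<alpha> \<in> Z \<and> (s \<alpha>, replicate (m-1) \<alpha>) \<in> BA"
proof -
  obtain N where N: "\<And>x. is_path {1..n} E s t x \<Longrightarrow> length (snd x) \<ge> N \<Longrightarrow> \<exists>r\<in>Z. sublist r (snd x)"
    using admiss by blast
  have "is_path {1..n} E s t (s \<alpha>, replicate N \<alpha>)"
    using a apath_replicate[of \<alpha> E s t] E_st[OF a(1)] by (auto simp: is_path_apath)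
  then obtain r where r: "r \<in> Z" "sublist r (replicate N \<alpha>)" using N by fastforce
  define m where "m = length r"
  have rr: "r = replicate m \<alpha>" using sublist_replicate[OF r(2)] by (simp add: m_def)
  have m2: "2 \<le> m" using Z_props[OF r(1)] by (simp add: m_def)
  have "\<not> sublist r' (replicate (m-1) \<alpha>)" if r': "r' \<in> Z" for r'
  proof
    assume sub: "sublist r' (replicate (m-1) \<alpha>)"
    have "sublist (replicate (m-1) \<alpha>) (replicate m \<alpha>)"
    proof -
      have "replicate m \<alpha> = \<alpha> # replicate (m-1) \<alpha>" using m2 by (cases m) auto
      then show ?thesis by (simp add: sublist_Cons_right)
    qed
    then have "sublist r' r" using sub rr sublist_order.order_trans by blast
    then have "r' = r" using Z_min r' r(1) by blast
    then have "length r \<le> m - 1" using sub rr sublist_length_le by fastforce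
    then show False using rr m2 by simp
  qed
  moreover have "is_path {1..n} E s t (s \<alpha>, replicate (m-1) \<alpha>)"
    using a apath_replicate[of \<alpha> E s t] E_st[OF a(1)] by (auto simp: is_path_apath)
  ultimately show ?thesis using m2 r(1) rr by (auto simp: basis_paths_def)
qed

end


lemma apath_junc: "apath E s t (xs @ ys) \<Longrightarrow> xs \<noteq> [] \<Longrightarrow> ys \<noteq> [] \<Longrightarrow> t (last xs) = s (hd ys)"
  by (simp add: apath_append)

lemma apath_nth: "apath E s t r \<Longrightarrow> Suc j < length r \<Longrightarrow> t (r ! j) = s (r ! Suc j)"
  by (simp add: apath_def)

lemma hd_take_app: "0 < i \<Longrightarrow> i < length r \<Longrightarrow> hd (take i r @ X) = hd r"
  by (cases r) (auto simp: take_Cons')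

lemma last_drop_app: "Suc i < length r \<Longrightarrow> last (X @ drop (Suc i) r) = last r"
  by (simp add: last_drop)

lemma last_take_nth: "0 < i \<Longrightarrow> i \<le> length r \<Longrightarrow> last (take i r) = r ! (i - 1)"
proof -
  assume i: "0 < i" "i \<le> length r"
  then have ne: "take i r \<noteq> []" by (cases r) auto
  have "length (take i r) = i" using i by simp
  then show ?thesis using last_conv_nth[OF ne] i by simp
qed

lemma hd_drop1: "1 < length r \<Longrightarrow> hd (drop 1 r) = r ! 1"
  by (simp add: hd_drop_conv_nth)

lemma hd_r: "r \<noteq> [] \<Longrightarrow> hd r = r ! 0"
  by (simp add: hd_conv_nth)

lemma last_r: "r \<noteq> [] \<Longrightarrow> last r = r ! (length r - 1)"
  by (simp add: last_conv_nth)

context gl begin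

definition Oset :: "('a \<times> 'a path) set" where
  "Oset = {(\<alpha>, (1, [])) | \<alpha>. \<alpha> \<in> E \<and> s \<alpha> = t \<alpha> \<and> s \<alpha> \<in> {1, n}}"

lemma EP:
  assumes r: "apath E s t r" "2 \<le> length r" and i: "i < length r" "r ! i = a" and ap: "(a, p) \<in> PA"
  defines "w \<equiv> take i r @ snd p @ drop (Suc i) r"
  shows "w \<noteq> [] \<and> s (hd w) = s (hd r) \<and> t (last w) = t (last r)"
proof -
  have pp: "s a = fst p" "t a = pend t p" "p \<in> BA" using ap by (auto simp: par1_def)
  have pB: "snd p \<noteq> [] \<longrightarrow> s (hd (snd p)) = fst p" using BA_path[OF pp(3)] by blast
  let ?m = "length r"
  have rne: "r \<noteq> []" using r by auto
  have ne: "w \<noteq> []" using i r by (auto simp: w_def)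
  have hd: "s (hd w) = s (hd r)"
  proof (cases "i = 0")
    case True
    show ?thesis
    proof (cases "snd p = []")
      case False
      then have "hd w = hd (snd p)" using True by (simp add: w_def)
      then show ?thesis using pB False pp(1) i True hd_r[OF rne] by simp
    next
      case Nil: True
      then have "w = drop 1 r" using True by (simp add: w_def)
      moreover have "1 < length r" using r by simp
      ultimately have "hd w = r ! 1" using hd_drop1 by simp
      moreover have "t (r ! 0) = s (r ! 1)" using apath_nth[OF r(1), of 0] r by simp
      moreover have "pend t p = fst p" using Nil by (simp add: pend_def)
      ultimately show ?thesis using pp i True hd_r[OF rne] by simp
    qed
  next
    case False
    then show ?thesis using hd_take_app[of i r] i by (simp add: w_def)
  qed
  have last: "t (last w) = t (last r)"
  proof (cases "Suc i < ?m")
    case False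
    then have im: "i = ?m - 1" using i by simp
    then have wd: "w = take i r @ snd p" by (simp add: w_def)
    show ?thesis
    proof (cases "snd p = []")
      case False
      then have "last w = last (snd p)" using wd by simp
      moreover have "pend t p = t (last (snd p))" using False by (simp add: pend_def)
      ultimately show ?thesis using pp i im last_r[OF rne] by simp
    next
      case Nil: True
      have i0: "0 < i" using im r by simp
      then have "last w = r ! (i - 1)" using wd Nil last_take_nth[of i r] i by simp
      moreover have "t (r ! (i - 1)) = s (r ! i)" using apath_nth[OF r(1), of "i - 1"] i i0 by simp
      moreover have "pend t p = fst p" using Nil by (simp add: pend_def)
      ultimately show ?thesis using pp i im last_r[OF rne] by simp
    qed
  next
    case True
    then show ?thesis using last_drop_app[of i r] by (simp add: w_def)
  qed
  show ?thesis using ne hd last by blast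
qed

lemma RS:
  assumes rZ: "r \<in> Z" and i: "i < length r" "r ! i = a" and S: "(a, g) \<in> SP" and nO: "(a, g) \<notin> Oset"
    and w: "w = take i r @ snd g @ drop (Suc i) r" and aw: "apath E s t w"
  shows "w \<noteq> [] \<and> (s (hd w) \<noteq> s (hd r) \<or> t (last w) \<noteq> t (last r))"
proof -
  have r: "apath E s t r" "2 \<le> length r" using Z_props[OF rZ] by auto
  have rne: "r \<noteq> []" using r by auto
  let ?m = "length r"
  obtain p where sp: "special_pair n E s t Z a p" and g: "g = path_star n p"
    using S unfolding SP_def by blast
  have p: "a \<in> E" "p \<in> BA" "glue n (s a) = glue n (fst p)" "glue n (t a) = glue n (pend t p)"
    "\<not> (s a = fst p \<and> t a = pend t p)" using sp unfolding special_pair_def by blast+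
  have sg: "snd g = snd p" using g by (simp add: path_star_def)
  have pB: "snd p \<noteq> [] \<longrightarrow> s (hd (snd p)) = fst p" using BA_path[OF p(2)] by blast
  have ne: "w \<noteq> []" using i r w by auto
  have main: "s (hd w) \<noteq> s (hd r) \<or> t (last w) \<noteq> t (last r)"
  proof (cases "snd p = []")
    case False
    have A: "s a = fst p" if i0: "0 < i"
    proof -
      have "w = take i r @ (snd p @ drop (Suc i) r)" using w sg by simp
      then have "t (last (take i r)) = s (hd (snd p @ drop (Suc i) r))"
        using apath_junc[of E s t "take i r" "snd p @ drop (Suc i) r"] aw i0 i False rne by auto
      moreover have "last (take i r) = r ! (i - 1)" using last_take_nth[of i r] i0 i by simp
      moreover have "t (r ! (i - 1)) = s (r ! i)" using apath_nth[OF r(1), of "i - 1"] i i0 by simp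
      ultimately show ?thesis using pB False i by simp
    qed
    have B: "t a = pend t p" if i1: "Suc i < ?m"
    proof -
      have "w = (take i r @ snd p) @ drop (Suc i) r" using w sg by simp
      then have "t (last (take i r @ snd p)) = s (hd (drop (Suc i) r))"
        using apath_junc[of E s t "take i r @ snd p" "drop (Suc i) r"] aw i1 False by auto
      moreover have "hd (drop (Suc i) r) = r ! Suc i" using i1 by (simp add: hd_drop_conv_nth)
      moreover have "t (r ! i) = s (r ! Suc i)" using apath_nth[OF r(1)] i1 by simp
      ultimately show ?thesis using False i by (simp add: pend_def)
    qed
    show ?thesis
    proof (cases "i = 0")
      case True
      then have "s a \<noteq> fst p" using B p(5) r by simp
      moreover have "hd w = hd (snd p)" using True w sg False by simp
      ultimately show ?thesis using pB False i True hd_r[OF rne] by simp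
    next
      case i0: False
      then have "\<not> Suc i < ?m" using A B p(5) by auto
      then have im: "i = ?m - 1" using i by simp
      have "t a \<noteq> pend t p" using A i0 p(5) by simp
      moreover have "last w = last (snd p)" using w sg False im by simp
      ultimately show ?thesis using False i im last_r[OF rne] by (simp add: pend_def)
    qed
  next
    case Nil: True
    have sne: "s a \<noteq> t a"
    proof
      assume eq: "s a = t a"
      have "pend t p = fst p" using Nil by (simp add: pend_def)
      then have "s a \<noteq> fst p" using p(5) eq by auto
      then have b: "s a \<in> {1, n} \<and> fst p \<in> {1, n}"
        using glue_eq E_st[OF p(1)] BA_path[OF p(2)] p(3) by metis
      then have "g = (1, [])" using g Nil glue_1n by (simp add: path_star_def)
      then have "(a, g) \<in> Oset" using b eq p(1) unfolding Oset_def by blast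
      then show False using nO by simp
    qed
    have w': "w = take i r @ drop (Suc i) r" using w sg Nil by simp
    show ?thesis
    proof (cases "i = 0")
      case True
      then have "w = drop 1 r" using w' by simp
      moreover have "1 < length r" using r by simp
      ultimately have "hd w = r ! 1" using hd_drop1 by simp
      moreover have "t (r ! 0) = s (r ! 1)" using apath_nth[OF r(1), of 0] r by simp
      ultimately show ?thesis using sne i True hd_r[OF rne] by simp
    next
      case i0: False
      show ?thesis
      proof (cases "Suc i < ?m")
        case True
        have "t (last (take i r)) = s (hd (drop (Suc i) r))"
          using apath_junc[of E s t "take i r" "drop (Suc i) r"] aw w' i0 True i rne by auto
        moreover have "last (take i r) = r ! (i - 1)" using last_take_nth[of i r] i0 i by simp
        moreover have "t (r ! (i - 1)) = s (r ! i)" using apath_nth[OF r(1), of "i - 1"] i i0 by simp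
        moreover have "hd (drop (Suc i) r) = r ! Suc i" using True by (simp add: hd_drop_conv_nth)
        moreover have "t (r ! i) = s (r ! Suc i)" using apath_nth[OF r(1)] True by simp
        ultimately show ?thesis using sne i by simp
      next
        case False
        then have im: "i = ?m - 1" using i by simp
        then have "w = take i r" using w' by simp
        then have "last w = r ! (i - 1)" using last_take_nth[of i r] i0 i by simp
        moreover have "t (r ! (i - 1)) = s (r ! i)" using apath_nth[OF r(1), of "i - 1"] i i0 by simp
        ultimately show ?thesis using sne i im last_r[OF rne] by simp
      qed
    qed
  qed
  show ?thesis using ne main by blast
qed

lemma RT:
  assumes ag: "(a, g) \<in> PB" and nS: "(a, g) \<notin> SP"
    and r: "r = [c, b]" "b \<in> E" "c \<in> E" "t c \<in> {1, n}" "s b \<in> {1, n}" "t c \<noteq> s b"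
    and i: "i < length r" "r ! i = a"
    and w: "w = take i r @ snd g @ drop (Suc i) r" and aw: "apath E s t w"
  shows False
proof -
  define p where "p = lft a g"
  have ap: "(a, p) \<in> PA" using classify[OF ag nS] by (simp add: p_def)
  note L = lft_props[OF ag]
  have pp: "s a = fst p" "t a = pend t p" "p \<in> BA" "a \<in> E" using ap by (auto simp: par1_def)
  have sg: "snd g = snd p" using L(5) by (simp add: p_def)
  have gp: "g = path_star n p" using L(2) by (simp add: p_def)
  have pB: "snd p \<noteq> [] \<longrightarrow> s (hd (snd p)) = fst p" using BA_path[OF pp(3)] by blast
  have triv: False if Nil: "snd p = []" "s a \<in> {1, n}"
  proof -
    have "s a = t a" using pp Nil by (simp add: pend_def)
    then have "(a, (1, [])) \<in> SP" using O_SP pp(4) Nil by blast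
    moreover have "g = (1, [])" using gp Nil pp(1) glue_1n by (simp add: path_star_def)
    ultimately show False using nS by simp
  qed
  show False
  proof (cases "i = 0")
    case True
    then have a: "a = c" and w': "w = snd p @ [b]" using i r w sg by auto
    show False
    proof (cases "snd p = []")
      case True
      then have "s a = t a" using pp by (simp add: pend_def)
      then show False using triv True r a by simp
    next
      case False
      then have "t (last (snd p)) = s b" using apath_junc[of E s t "snd p" "[b]"] aw w' by simp
      moreover have "pend t p = t (last (snd p))" using False by (simp add: pend_def)
      ultimately show False using pp a r by simp
    qed
  next
    case False
    then have i1: "i = 1" using i r by simp
    then have a: "a = b" and w': "w = [c] @ snd p" using i r w sg by auto
    show False
    proof (cases "snd p = []")
      case True
      then show False using triv r a by simp
    next
      case False
      then have "t c = s (hd (snd p))" using apath_junc[of E s t "[c]" "snd p"] aw w' by simp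
      then show False using pp a r pB False by simp
    qed
  qed
qed

end


definition cnt :: "nat set \<Rightarrow> 'a set \<Rightarrow> ('a \<Rightarrow> nat) \<Rightarrow> ('a \<Rightarrow> nat) \<Rightarrow> 'a list set \<Rightarrow> 'a list \<Rightarrow> 'a path \<Rightarrow> 'a \<times> 'a path \<Rightarrow> nat" where
  "cnt V E s t Z r q x = card {i. i < length r \<and> r ! i = fst x \<and> replace_at s r i (snd x) = q \<and> q \<in> basis_paths V E s t Z}"

lemma delta1_eq: "delta1 V E s t Z f (r, q) =
   (if r \<in> Z then \<Sum>x\<in>par1 V E s t Z. f x * of_nat (cnt V E s t Z r q x) else 0)"
  by (simp add: delta1_def cnt_def case_prod_unfold)

context gl begin

definition Psi :: "('a \<times> 'a path \<Rightarrow> 'k::field) \<Rightarrow> ('a \<times> 'a path \<Rightarrow> 'k)" where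
  "Psi h = (\<lambda>x. if x \<in> PA then h (fst x, path_star n (snd x)) else 0)"

definition Phi :: "('a \<times> 'a path \<Rightarrow> 'k::field) \<Rightarrow> ('a \<times> 'a path \<Rightarrow> 'k)" where
  "Phi f = (\<lambda>x. if x \<in> PB \<and> x \<notin> SP then f (fst x, lft (fst x) (snd x)) else 0)"

abbreviation "phi \<equiv> (\<lambda>x. (fst x, path_star n (snd x)))"

lemma phi_inj: "inj_on phi PA"
proof
  fix x y assume x: "x \<in> PA" and y: "y \<in> PA" and e: "phi x = phi y"
  obtain a p where xa: "x = (a, p)" by (cases x)
  obtain b p' where yb: "y = (b, p')" by (cases y)
  have "a = b" using e xa yb by simp
  then have "lft a (path_star n p) = lft a (path_star n p')" using e xa yb by simp
  then have "p = p'" using lft_star x y xa yb \<open>a = b\<close> by simp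
  then show "x = y" using xa yb \<open>a = b\<close> by simp
qed

lemma phi_PA: "phi ` PA \<subseteq> PB"
  using PA_PB by auto

lemma cntB_zero_bad:
  fixes h :: "'a \<times> 'a path \<Rightarrow> 'k::field"
  assumes hS: "\<And>x. x \<in> SP \<Longrightarrow> h x = 0" and rZB: "r \<in> ZB" and rZ: "r \<notin> Z"
  shows "delta1 {1..n-1} E sB tB ZB h (r, q) = 0"
proof -
  obtain b c where r: "r = [c, b]" "b \<in> E" "c \<in> E" "t c \<in> {1, n}" "s b \<in> {1, n}" "t c \<noteq> s b"
    using ZB_cases[OF rZB] rZ by blast
  have "h x * of_nat (cnt {1..n-1} E sB tB ZB r q x) = 0" if x: "x \<in> PB" for x
  proof (cases "x \<in> SP")
    case True then show ?thesis using hS by simp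
  next
    case False
    obtain a g where xa: "x = (a, g)" by (cases x)
    have e: "{i. i < length r \<and> r ! i = a \<and> replace_at sB r i g = q \<and> q \<in> BB} = {}"
    proof (rule ccontr)
      assume "{i. i < length r \<and> r ! i = a \<and> replace_at sB r i g = q \<and> q \<in> BB} \<noteq> {}"
      then obtain i where i: "i < length r" "r ! i = a" "replace_at sB r i g = q" "q \<in> BB" by blast
      have "snd q = take i r @ snd g @ drop (Suc i) r" using i(3) by (auto simp: replace_at_def)
      moreover have "apath E s t (snd q)" using BB_apath[OF i(4)] .
      ultimately show False using RT[of a g r c b i "snd q"] x False xa r i by simp
    qed
    have "cnt {1..n-1} E sB tB ZB r q x = 0" unfolding cnt_def xa fst_conv snd_conv e by simp
    then show ?thesis by simp
  qed
  then have "(\<Sum>x\<in>PB. h x * of_nat (cnt {1..n-1} E sB tB ZB r q x)) = 0"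
    by (intro sum.neutral) blast
  then show ?thesis using rZB by (simp add: delta1_eq)
qed

lemma deltaB_fst:
  fixes h :: "'a \<times> 'a path \<Rightarrow> 'k::field"
  assumes "fst q \<noteq> glue n (s (hd r))"
  shows "delta1 {1..n-1} E sB tB ZB h (r, q) = 0"
proof -
  have "cnt {1..n-1} E sB tB ZB r q x = 0" for x
    using assms by (auto simp: cnt_def replace_at_def)
  then show ?thesis by (simp add: delta1_eq)
qed

lemma deltaA_fst:
  fixes h :: "'a \<times> 'a path \<Rightarrow> 'k::field"
  assumes "fst q \<noteq> s (hd r)"
  shows "delta1 {1..n} E s t Z h (r, q) = 0"
proof -
  have "cnt {1..n} E s t Z r q x = 0" for x
    using assms by (auto simp: cnt_def replace_at_def)
  then show ?thesis by (simp add: delta1_eq)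
qed

lemma cnt_eq:
  assumes rZ: "r \<in> Z" and ap: "(a, p) \<in> PA" and fq: "fst q = glue n (s (hd r))"
  shows "cnt {1..n-1} E sB tB ZB r q (a, path_star n p) = cnt {1..n} E s t Z r (s (hd r), snd q) (a, p)"
proof -
  have r: "apath E s t r" "2 \<le> length r" using Z_props[OF rZ] by auto
  have hE: "hd r \<in> E" using r by (cases r) (auto simp: apath_Cons)
  have q: "q = (glue n (s (hd r)), snd q)" using fq by (cases q) simp
  have "{i. i < length r \<and> r ! i = a \<and> replace_at sB r i (path_star n p) = q \<and> q \<in> BB}
      = {i. i < length r \<and> r ! i = a \<and> replace_at s r i p = (s (hd r), snd q) \<and> (s (hd r), snd q) \<in> BA}"
  proof (intro Collect_cong iffI)
    fix i
    assume h: "i < length r \<and> r ! i = a \<and> replace_at sB r i (path_star n p) = q \<and> q \<in> BB"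
    then have L: "snd q = take i r @ snd p @ drop (Suc i) r" by (auto simp: replace_at_def path_star_def)
    have E: "snd q \<noteq> [] \<and> s (hd (snd q)) = s (hd r) \<and> t (last (snd q)) = t (last r)"
      using EP[OF r(1) r(2), of i a p] h ap L by simp
    have "(s (hd r), snd q) \<in> BA"
      using h BB_apath[of q] E E_st[OF hE] Z_sub_ZB
      by (auto simp: basis_paths_def is_path_apath)
    then show "i < length r \<and> r ! i = a \<and> replace_at s r i p = (s (hd r), snd q) \<and> (s (hd r), snd q) \<in> BA"
      using h L by (auto simp: replace_at_def)
  next
    fix i
    assume h: "i < length r \<and> r ! i = a \<and> replace_at s r i p = (s (hd r), snd q) \<and> (s (hd r), snd q) \<in> BA"
    then have L: "snd q = take i r @ snd p @ drop (Suc i) r" by (auto simp: replace_at_def)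
    have "path_star n (s (hd r), snd q) \<in> BB" using path_star_BB h by blast
    then have "q \<in> BB" using q by (simp add: path_star_def)
    then show "i < length r \<and> r ! i = a \<and> replace_at sB r i (path_star n p) = q \<and> q \<in> BB"
      using h L q by (auto simp: replace_at_def path_star_def)
  qed
  then show ?thesis by (simp add: cnt_def)
qed

lemma row_eq:
  fixes h :: "'a \<times> 'a path \<Rightarrow> 'k::field"
  assumes hc: "h \<in> cochains1 {1..n-1} E sB tB ZB" and hS: "\<And>x. x \<in> SP \<Longrightarrow> h x = 0"
    and rZ: "r \<in> Z" and fq: "fst q = glue n (s (hd r))"
  shows "delta1 {1..n-1} E sB tB ZB h (r, q) = delta1 {1..n} E s t Z (Psi h) (r, (s (hd r), snd q))"
proof -
  let ?F = "\<lambda>x. h x * of_nat (cnt {1..n-1} E sB tB ZB r q x) :: 'k"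
  have rZB: "r \<in> ZB" using rZ Z_sub_ZB by auto
  have "(\<Sum>x\<in>PB. ?F x) = (\<Sum>x\<in>phi ` PA. ?F x)"
  proof (rule sum.mono_neutral_right[OF PB_fin phi_PA])
    show "\<forall>x\<in>PB - phi ` PA. ?F x = 0"
    proof
      fix x assume x: "x \<in> PB - phi ` PA"
      obtain a g where xa: "x = (a, g)" by (cases x)
      show "?F x = 0"
      proof (cases "x \<in> SP")
        case True then show ?thesis using hS by simp
      next
        case False
        then have "(a, lft a g) \<in> PA" using classify x xa by auto
        moreover have "phi (a, lft a g) = x" using lft_props(2)[of a g] x xa by auto
        ultimately show ?thesis using x by force
      qed
    qed
  qed
  also have "\<dots> = (\<Sum>y\<in>PA. ?F (phi y))"
    using sum.reindex[OF phi_inj, of ?F] by (simp add: o_def)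
  also have "\<dots> = (\<Sum>y\<in>PA. Psi h y * of_nat (cnt {1..n} E s t Z r (s (hd r), snd q) y))"
  proof (rule sum.cong[OF refl])
    fix y assume y: "y \<in> PA"
    obtain a p where ya: "y = (a, p)" by (cases y)
    show "?F (phi y) = Psi h y * of_nat (cnt {1..n} E s t Z r (s (hd r), snd q) y)"
      using cnt_eq[OF rZ _ fq, of a p] y ya by (simp add: Psi_def)
  qed
  finally show ?thesis using rZ rZB by (simp add: delta1_eq)
qed

lemma EQ:
  fixes h :: "'a \<times> 'a path \<Rightarrow> 'k::field"
  assumes hc: "h \<in> cochains1 {1..n-1} E sB tB ZB" and hS: "\<And>x. x \<in> SP \<Longrightarrow> h x = 0"
  shows "delta1 {1..n-1} E sB tB ZB h = (\<lambda>_. 0) \<longleftrightarrow> delta1 {1..n} E s t Z (Psi h) = (\<lambda>_. 0)"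
proof
  assume B: "delta1 {1..n-1} E sB tB ZB h = (\<lambda>_. 0)"
  show "delta1 {1..n} E s t Z (Psi h) = (\<lambda>_. 0)"
  proof
    fix x :: "'a list \<times> 'a path"
    obtain r q where x: "x = (r, q)" by (cases x)
    show "delta1 {1..n} E s t Z (Psi h) x = 0"
    proof (cases "r \<in> Z \<and> fst q = s (hd r)")
      case True
      have "delta1 {1..n-1} E sB tB ZB h (r, (glue n (s (hd r)), snd q)) = delta1 {1..n} E s t Z (Psi h) (r, (s (hd r), snd q))"
        using row_eq[OF hc hS, of r "(glue n (s (hd r)), snd q)"] True by simp
      moreover have "(s (hd r), snd q) = q" using True by (cases q) simp
      ultimately show ?thesis using B x by (simp add: fun_eq_iff)
    next
      case False
      show ?thesis
      proof (cases "r \<in> Z")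
        case True
        then have "fst q \<noteq> s (hd r)" using False by simp
        then show ?thesis using deltaA_fst[of q r "Psi h"] x by simp
      next
        case False
        then show ?thesis using x by (simp add: delta1_eq)
      qed
    qed
  qed
next
  assume A: "delta1 {1..n} E s t Z (Psi h) = (\<lambda>_. 0)"
  show "delta1 {1..n-1} E sB tB ZB h = (\<lambda>_. 0)"
  proof
    fix x :: "'a list \<times> 'a path"
    obtain r q where x: "x = (r, q)" by (cases x)
    show "delta1 {1..n-1} E sB tB ZB h x = 0"
    proof (cases "r \<in> Z")
      case True
      show ?thesis
      proof (cases "fst q = glue n (s (hd r))")
        case True
        then show ?thesis using row_eq[OF hc hS \<open>r \<in> Z\<close> True] A x by simp
      next
        case False
        then show ?thesis using deltaB_fst x by simp
      qed
    next
      case False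
      show ?thesis
      proof (cases "r \<in> ZB")
        case True
        then show ?thesis using cntB_zero_bad[OF hS True False] x by simp
      next
        case nB: False
        then show ?thesis using x by (simp add: delta1_eq)
      qed
    qed
  qed
qed

end


definition chk :: "'k::field itself \<Rightarrow> nat \<Rightarrow> 'a set \<Rightarrow> ('a \<Rightarrow> nat) \<Rightarrow> ('a \<Rightarrow> nat) \<Rightarrow> 'a list set \<Rightarrow> bool" where
  "chk _ n E s t Z \<longleftrightarrow> (\<forall>\<alpha> m. \<alpha> \<in> E \<and> s \<alpha> = t \<alpha> \<and> s \<alpha> \<in> {1, n} \<and> 2 \<le> m \<and> replicate m \<alpha> \<in> Z \<longrightarrow> (of_nat m :: 'k) \<noteq> 0)"

lemma chk_D: "chk TYPE('k::field) n E s t Z \<Longrightarrow> \<alpha> \<in> E \<Longrightarrow> s \<alpha> = t \<alpha> \<Longrightarrow> s \<alpha> \<in> {1, n} \<Longrightarrow> 2 \<le> m \<Longrightarrow>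
    replicate m \<alpha> \<in> Z \<Longrightarrow> (of_nat m :: 'k) \<noteq> 0"
  unfolding chk_def by blast

context gl begin

lemma DJ:
  fixes f :: "'a \<times> 'a path \<Rightarrow> 'k::field"
  assumes fc: "f \<in> cochains1 {1..n-1} E sB tB ZB" and fO: "\<And>x. x \<in> Oset \<Longrightarrow> f x = 0"
    and fd: "delta1 {1..n-1} E sB tB ZB f = (\<lambda>_. 0)"
  defines "fT \<equiv> (\<lambda>x. if x \<in> SP then 0 else f x)" and "fS \<equiv> (\<lambda>x. if x \<in> SP then f x else 0)"
  shows "delta1 {1..n-1} E sB tB ZB fT = (\<lambda>_. 0) \<and> delta1 {1..n-1} E sB tB ZB fS = (\<lambda>_. 0)"
proof -
  have fsum: "f = (\<lambda>x. fT x + fS x)" by (auto simp: fT_def fS_def fun_eq_iff)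
  have dsum: "delta1 {1..n-1} E sB tB ZB fT y + delta1 {1..n-1} E sB tB ZB fS y = 0" for y
    using fd fsum delta1_add[of "{1..n-1}" E sB tB ZB fT fS] by (metis)
  have hS: "\<And>x. x \<in> SP \<Longrightarrow> fT x = 0" by (simp add: fT_def)
  have one0: "delta1 {1..n-1} E sB tB ZB fT (r, q) = 0 \<or> delta1 {1..n-1} E sB tB ZB fS (r, q) = 0" for r q
  proof (cases "r \<in> Z")
    case False
    then show ?thesis
    proof (cases "r \<in> ZB")
      case True
      then show ?thesis using cntB_zero_bad[OF hS True False] by simp
    next
      case nB: False
      then show ?thesis by (simp add: delta1_eq)
    qed
  next
    case rZ: True
    have r: "apath E s t r" "2 \<le> length r" using Z_props[OF rZ] by auto
    have rZB: "r \<in> ZB" using rZ Z_sub_ZB by auto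
    show ?thesis
    proof (rule ccontr)
      assume "\<not> ?thesis"
      then have nT: "(\<Sum>x\<in>PB. fT x * of_nat (cnt {1..n-1} E sB tB ZB r q x)) \<noteq> 0"
        and nS: "(\<Sum>x\<in>PB. fS x * of_nat (cnt {1..n-1} E sB tB ZB r q x)) \<noteq> 0"
        using rZB by (auto simp: delta1_eq)
      obtain x where x: "x \<in> PB" "fT x * of_nat (cnt {1..n-1} E sB tB ZB r q x) \<noteq> 0"
        using sum.not_neutral_contains_not_neutral[OF nT] by blast
      obtain y where y: "y \<in> PB" "fS y * of_nat (cnt {1..n-1} E sB tB ZB r q y) \<noteq> 0"
        using sum.not_neutral_contains_not_neutral[OF nS] by blast
      obtain a g where xa: "x = (a, g)" by (cases x)
      obtain b g' where yb: "y = (b, g')" by (cases y)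
      have xS: "x \<notin> SP" using x by (auto simp: fT_def)
      have yS: "y \<in> SP" "f y \<noteq> 0" using y by (auto simp: fS_def split: if_splits)
      have yO: "y \<notin> Oset" using yS fO by blast
      have c1: "cnt {1..n-1} E sB tB ZB r q x \<noteq> 0" using x(2) by (metis mult_zero_right of_nat_0)
      have "{i. i < length r \<and> r ! i = a \<and> replace_at sB r i g = q \<and> q \<in> BB} \<noteq> {}"
      proof
        assume e: "{i. i < length r \<and> r ! i = a \<and> replace_at sB r i g = q \<and> q \<in> BB} = {}"
        have "cnt {1..n-1} E sB tB ZB r q x = 0" unfolding cnt_def xa fst_conv snd_conv e by simp
        then show False using c1 by simp
      qed
      then obtain i where i: "i < length r" "r ! i = a" "replace_at sB r i g = q" "q \<in> BB"
        by blast
      have c2: "cnt {1..n-1} E sB tB ZB r q y \<noteq> 0" using y(2) by (metis mult_zero_right of_nat_0)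
      have "{i. i < length r \<and> r ! i = b \<and> replace_at sB r i g' = q \<and> q \<in> BB} \<noteq> {}"
      proof
        assume e: "{i. i < length r \<and> r ! i = b \<and> replace_at sB r i g' = q \<and> q \<in> BB} = {}"
        have "cnt {1..n-1} E sB tB ZB r q y = 0" unfolding cnt_def yb fst_conv snd_conv e by simp
        then show False using c2 by simp
      qed
      then obtain j where j: "j < length r" "r ! j = b" "replace_at sB r j g' = q"
        by blast
      have aw: "apath E s t (snd q)" using BB_apath[OF i(4)] .
      have w1: "snd q = take i r @ snd (lft a g) @ drop (Suc i) r"
        using i(3) lft_props(5)[of a g] x xa by (auto simp: replace_at_def)
      have ap: "(a, lft a g) \<in> PA" using classify x xa xS by auto
      have E1: "snd q \<noteq> [] \<and> s (hd (snd q)) = s (hd r) \<and> t (last (snd q)) = t (last r)"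
        using EP[OF r(1) r(2) i(1) i(2) ap] w1 by simp
      have w2: "snd q = take j r @ snd g' @ drop (Suc j) r"
        using j(3) by (auto simp: replace_at_def)
      have "snd q \<noteq> [] \<and> (s (hd (snd q)) \<noteq> s (hd r) \<or> t (last (snd q)) \<noteq> t (last r))"
        using RS[OF rZ j(1) j(2) _ _ w2 aw] yS yO yb by simp
      then show False using E1 by simp
    qed
  qed
  have "delta1 {1..n-1} E sB tB ZB fT = (\<lambda>_. 0)"
  proof
    fix y :: "'a list \<times> 'a path"
    obtain r q where y: "y = (r, q)" by (cases y)
    show "delta1 {1..n-1} E sB tB ZB fT y = 0" using one0[of r q] dsum[of y] y by auto
  qed
  moreover have "delta1 {1..n-1} E sB tB ZB fS = (\<lambda>_. 0)"
  proof
    fix y :: "'a list \<times> 'a path"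
    obtain r q where y: "y = (r, q)" by (cases y)
    show "delta1 {1..n-1} E sB tB ZB fS y = 0" using one0[of r q] dsum[of y] y by auto
  qed
  ultimately show ?thesis by blast
qed

lemma VA:
  fixes f :: "'a \<times> 'a path \<Rightarrow> 'k::field"
  assumes ch: "chk TYPE('k) n E s t Z"
    and f: "f \<in> ker_delta1 {1..n} E s t Z" and a: "\<alpha> \<in> E" "s \<alpha> = t \<alpha>" "s \<alpha> \<in> {1, n}"
  shows "f (\<alpha>, (s \<alpha>, [])) = 0"
proof -
  obtain m where m: "2 \<le> m" "replicate m \<alpha> \<in> Z" "(s \<alpha>, replicate (m-1) \<alpha>) \<in> BA"
    using loop_rel[OF a(1) a(2)] by blast
  show ?thesis using ker_loop_zero[OF f m(2) m(1) m(3) chk_D[OF ch a m(1) m(2)] PA_fin] .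
qed

lemma VB:
  fixes f :: "'a \<times> 'a path \<Rightarrow> 'k::field"
  assumes ch: "chk TYPE('k) n E s t Z"
    and f: "f \<in> ker_delta1 {1..n-1} E sB tB ZB" and x: "x \<in> Oset"
  shows "f x = 0"
proof -
  obtain \<alpha> where xa: "x = (\<alpha>, (1, []))" and a: "\<alpha> \<in> E" "s \<alpha> = t \<alpha>" "s \<alpha> \<in> {1, n}"
    using x unfolding Oset_def by blast
  obtain m where m: "2 \<le> m" "replicate m \<alpha> \<in> Z" "(s \<alpha>, replicate (m-1) \<alpha>) \<in> BA"
    using loop_rel[OF a(1) a(2)] by blast
  have sB: "sB \<alpha> = 1" using a(3) glue_1n by simp
  have "path_star n (s \<alpha>, replicate (m-1) \<alpha>) \<in> BB" using path_star_BB[OF m(3)] .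
  then have b: "(sB \<alpha>, replicate (m-1) \<alpha>) \<in> BB" by (simp add: path_star_def)
  have "f (\<alpha>, (sB \<alpha>, [])) = 0"
    using ker_loop_zero[OF f _ m(1) b chk_D[OF ch a m(1) m(2)] PB_fin] m(2) Z_sub_ZB by blast
  then show ?thesis using xa sB by simp
qed

end


context gl begin

lemma Phi_hom: "module_hom fscale fscale (Phi :: ('a \<times> 'a path \<Rightarrow> 'k::field) \<Rightarrow> _)"
  unfolding module_hom_iff
  using fs.module_axioms by (auto simp: Phi_def fscale_def fun_eq_iff)

lemma KA_iso:
  fixes f :: "'a \<times> 'a path \<Rightarrow> 'k::field"
  assumes ch: "chk TYPE('k) n E s t Z"
    and f: "f \<in> ker_delta1 {1..n} E s t Z"
  shows "Psi (Phi f) = f" "Phi f \<in> ker_delta1 {1..n-1} E sB tB ZB" "\<forall>x\<in>SP. Phi f x = 0"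
proof -
  show PP: "Psi (Phi f) = f"
  proof
    fix x :: "'a \<times> 'a path"
    obtain a p where xa: "x = (a, p)" by (cases x)
    show "Psi (Phi f) x = f x"
    proof (cases "x \<in> PA")
      case False
      have "f x = 0" using f False unfolding ker_delta1_def cochains1_def by blast
      then show ?thesis using False by (simp add: Psi_def)
    next
      case True
      have PB: "(a, path_star n p) \<in> PB" using PA_PB True xa by simp
      show ?thesis
      proof (cases "(a, path_star n p) \<in> SP")
        case False
        then show ?thesis using True PB xa lft_star[of a p] by (simp add: Psi_def Phi_def)
      next
        case S: True
        have h: "snd p = [] \<and> s a = t a \<and> s a \<in> {1, n}" using PA_SP[of a p] True[unfolded xa] S by blast
        have "fst p = s a" using True xa by (simp add: par1_def)
        then have pe: "p = (s a, [])" using h by (simp add: prod_eq_iff)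
        have aE: "a \<in> E" using True xa by (simp add: par1_def)
        have "f (a, (s a, [])) = 0" using VA[OF ch f aE] h by blast
        have "Psi (Phi f) x = Phi f (a, path_star n p)" using True xa by (simp add: Psi_def)
        also have "\<dots> = 0" using S by (simp add: Phi_def)
        also have "\<dots> = f x" using \<open>f (a, (s a, [])) = 0\<close> xa pe by simp
        finally show ?thesis .
      qed
    qed
  qed
  have c: "Phi f \<in> cochains1 {1..n-1} E sB tB ZB" by (simp add: cochains1_def Phi_def)
  have S: "\<And>x. x \<in> SP \<Longrightarrow> Phi f x = 0" by (simp add: Phi_def)
  then show "\<forall>x\<in>SP. Phi f x = 0" by blast
  have "delta1 {1..n} E s t Z f = (\<lambda>_. 0)" using f by (simp add: ker_delta1_def)
  then have "delta1 {1..n-1} E sB tB ZB (Phi f) = (\<lambda>_. 0)" using EQ[OF c S] PP by simp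
  then show "Phi f \<in> ker_delta1 {1..n-1} E sB tB ZB" using c by (simp add: ker_delta1_def)
qed

lemma KT_iso:
  fixes h :: "'a \<times> 'a path \<Rightarrow> 'k::field"
  assumes h: "h \<in> ker_delta1 {1..n-1} E sB tB ZB" and hS: "\<forall>x\<in>SP. h x = 0"
  shows "Psi h \<in> ker_delta1 {1..n} E s t Z" "Phi (Psi h) = h"
proof -
  have c: "h \<in> cochains1 {1..n-1} E sB tB ZB" using h by (simp add: ker_delta1_def)
  have "delta1 {1..n-1} E sB tB ZB h = (\<lambda>_. 0)" using h by (simp add: ker_delta1_def)
  then have "delta1 {1..n} E s t Z (Psi h) = (\<lambda>_. 0)" using EQ[OF c] hS by blast
  then show "Psi h \<in> ker_delta1 {1..n} E s t Z"
    by (simp add: ker_delta1_def cochains1_def Psi_def)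
  show "Phi (Psi h) = h"
  proof
    fix x :: "'a \<times> 'a path"
    obtain a q where xa: "x = (a, q)" by (cases x)
    show "Phi (Psi h) x = h x"
    proof (cases "x \<in> PB \<and> x \<notin> SP")
      case True
      then have "(a, lft a q) \<in> PA" using classify xa by simp
      moreover have "path_star n (lft a q) = q" using lft_props(2) True xa by simp
      ultimately show ?thesis using True xa by (simp add: Phi_def Psi_def)
    next
      case False
      have "h x = 0" using c hS False unfolding cochains1_def by blast
      moreover have "Phi (Psi h) x = 0" unfolding Phi_def using False by (subst if_not_P) auto
      ultimately show ?thesis by simp
    qed
  qed
qed

lemma dim_split:
  assumes ch: "chk TYPE('k::field) n E s t Z"
  shows "fs.dim (ker_delta1 {1..n-1} E sB tB ZB :: ('a \<times> 'a path \<Rightarrow> 'k) set)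
       = fs.dim (ker_delta1 {1..n} E s t Z :: ('a \<times> 'a path \<Rightarrow> 'k) set)
         + fs.dim (ker_delta1 {1..n-1} E sB tB ZB \<inter> fs.span (ind ` SP) :: ('a \<times> 'a path \<Rightarrow> 'k) set)"
proof -
  define KA where "KA = (ker_delta1 {1..n} E s t Z :: ('a \<times> 'a path \<Rightarrow> 'k) set)"
  define KB where "KB = (ker_delta1 {1..n-1} E sB tB ZB :: ('a \<times> 'a path \<Rightarrow> 'k) set)"
  define KS where "KS = KB \<inter> fs.span (ind ` SP)"
  define KT where "KT = {h \<in> KB. \<forall>x\<in>SP. h x = 0}"
  have spanS: "fs.span (ind ` SP) = {f :: 'a \<times> 'a path \<Rightarrow> 'k. \<forall>y. y \<notin> SP \<longrightarrow> f y = 0}"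
    using span_ind[OF SP_fin] .
  have KA_span: "KA \<subseteq> fs.span (ind ` PA)"
    using span_ind[OF PA_fin] by (auto simp: KA_def ker_delta1_def cochains1_def)
  have KB_span: "KB \<subseteq> fs.span (ind ` PB)"
    using span_ind[OF PB_fin] by (auto simp: KB_def ker_delta1_def cochains1_def)
  have subA: "fs.subspace KA" unfolding KA_def by (rule ker_subspace)
  have subB: "fs.subspace KB" unfolding KB_def by (rule ker_subspace)
  have subT: "fs.subspace KT"
    using subB unfolding KT_def fs.subspace_def by (auto simp: fscale_def)
  have subS: "fs.subspace KS"
    unfolding KS_def by (intro fs.subspace_inter subB fs.subspace_span)
  interpret Ph: module_hom fscale fscale "Phi :: ('a \<times> 'a path \<Rightarrow> 'k) \<Rightarrow> _" by (rule Phi_hom)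
  obtain BAs where BAs: "BAs \<subseteq> KA" "fs.independent BAs" "KA \<subseteq> fs.span BAs" "card BAs = fs.dim KA"
    using fs.basis_exists by blast
  have finBA: "finite BAs"
    using fs.independent_span_bound[of "ind ` PA" BAs] BAs KA_span PA_fin by blast
  obtain BSs where BSs: "BSs \<subseteq> KS" "fs.independent BSs" "KS \<subseteq> fs.span BSs" "card BSs = fs.dim KS"
    using fs.basis_exists by blast
  have finBS: "finite BSs"
    using fs.independent_span_bound[of "ind ` PB" BSs] BSs KB_span PB_fin unfolding KS_def by blast
  have spanBA: "fs.span BAs = KA"
    using BAs subA by (metis fs.span_subspace)
  have injKA: "inj_on Phi KA"
  proof
    fix x y assume xy: "x \<in> KA" "y \<in> KA" "Phi x = Phi y"
    have "x = Psi (Phi x)" using KA_iso(1)[OF ch, of x] xy(1) unfolding KA_def by simp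
    also have "\<dots> = Psi (Phi y)" using xy(3) by simp
    also have "\<dots> = y" using KA_iso(1)[OF ch, of y] xy(2) unfolding KA_def by simp
    finally show "x = y" .
  qed
  define BTs where "BTs = Phi ` BAs"
  have BT_KT: "BTs \<subseteq> KT" using BAs KA_iso[OF ch] unfolding BTs_def KT_def KA_def KB_def by blast
  have indBT: "fs.independent BTs"
    unfolding BTs_def using Ph.independent_injective_image[OF BAs(2)] injKA spanBA by simp
  have KT_span: "KT \<subseteq> fs.span BTs"
  proof
    fix h assume h: "h \<in> KT"
    then have "Psi h \<in> KA" "Phi (Psi h) = h" using KT_iso unfolding KT_def KA_def KB_def by blast+
    then show "h \<in> fs.span BTs" unfolding BTs_def Ph.span_image spanBA by (metis imageI)
  qed
  have cardBT: "card BTs = card BAs"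
    unfolding BTs_def using injKA BAs(1) by (metis card_image inj_on_subset)
  have finBT: "finite BTs" unfolding BTs_def using finBA by simp
  have spBT: "fs.span BTs \<subseteq> KT" using BT_KT subT by (rule fs.span_minimal)
  have spBS: "fs.span BSs \<subseteq> KS" using BSs(1) subS by (rule fs.span_minimal)
  have KT0: "\<And>x y. x \<in> KT \<Longrightarrow> y \<in> SP \<Longrightarrow> x y = 0" unfolding KT_def by blast
  have KS0: "\<And>x y. x \<in> KS \<Longrightarrow> y \<notin> SP \<Longrightarrow> x y = 0" unfolding KS_def spanS by blast
  have disj: "BTs \<inter> BSs = {}"
  proof (rule ccontr)
    assume "BTs \<inter> BSs \<noteq> {}"
    then obtain x where x: "x \<in> BTs" "x \<in> BSs" by blast
    have "x = 0"
    proof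
      fix y show "x y = 0 y" using KT0[of x y] KS0[of x y] x BT_KT BSs(1) by (cases "y \<in> SP") auto
    qed
    then show False using x(1) indBT fs.dependent_zero by blast
  qed
  have indU: "fs.independent (BTs \<union> BSs)"
  proof (rule fs.independent_if_scalars_zero)
    show "finite (BTs \<union> BSs)" using finBT finBS by simp
  next
    fix u :: "('a \<times> 'a path \<Rightarrow> 'k) \<Rightarrow> 'k" and x
    assume sum0: "(\<Sum>x\<in>BTs \<union> BSs. fscale (u x) x) = 0" and x: "x \<in> BTs \<union> BSs"
    define X where "X = (\<Sum>x\<in>BTs. fscale (u x) x)"
    define Y where "Y = (\<Sum>x\<in>BSs. fscale (u x) x)"
    have XY: "X + Y = 0" using sum0 sum.union_disjoint[OF finBT finBS disj, of "\<lambda>x. fscale (u x) x"] by (simp add: X_def Y_def)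
    have XT: "X \<in> KT" unfolding X_def using spBT by (intro subsetD[OF spBT] fs.span_sum fs.span_scale fs.span_base)
    have YS: "Y \<in> KS" unfolding Y_def by (intro subsetD[OF spBS] fs.span_sum fs.span_scale fs.span_base)
    have X0: "X = 0"
    proof
      fix y
      have "X y + Y y = 0" using XY by (metis plus_fun_apply zero_fun_apply)
      then show "X y = 0 y" using KT0[OF XT, of y] KS0[OF YS, of y] by (cases "y \<in> SP") auto
    qed
    then have Y0: "Y = 0" using XY by simp
    show "u x = 0"
    proof (cases "x \<in> BTs")
      case True
      show ?thesis using fs.independentD[OF indBT finBT subset_refl, of u x] X0 True by (simp add: X_def)
    next
      case False
      then have "x \<in> BSs" using x by simp
      then show ?thesis using fs.independentD[OF BSs(2) finBS subset_refl, of u x] Y0 by (simp add: Y_def)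
    qed
  qed
  have U_KB: "BTs \<union> BSs \<subseteq> KB" using BT_KT BSs(1) unfolding KT_def KS_def by blast
  have KB_U: "KB \<subseteq> fs.span (BTs \<union> BSs)"
  proof
    fix f assume f: "f \<in> KB"
    define fT where "fT = (\<lambda>x. if x \<in> SP then 0 else f x)"
    define fS where "fS = (\<lambda>x. if x \<in> SP then f x else 0)"
    have fc: "f \<in> cochains1 {1..n-1} E sB tB ZB" "delta1 {1..n-1} E sB tB ZB f = (\<lambda>_. 0)"
      using f unfolding KB_def ker_delta1_def by auto
    have fO: "\<And>x. x \<in> Oset \<Longrightarrow> f x = 0" using VB[OF ch] f unfolding KB_def by blast
    have d: "delta1 {1..n-1} E sB tB ZB fT = (\<lambda>_. 0)" "delta1 {1..n-1} E sB tB ZB fS = (\<lambda>_. 0)"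
      using DJ[OF fc(1) fO fc(2)] unfolding fT_def fS_def by auto
    have "fT \<in> KT" using fc(1) d(1) unfolding KT_def KB_def ker_delta1_def cochains1_def fT_def by auto
    then have fT': "fT \<in> fs.span (BTs \<union> BSs)" using KT_span fs.span_mono[of BTs "BTs \<union> BSs"] by blast
    have "fS \<in> KS"
      using fc(1) d(2) SP_sub unfolding KS_def spanS KB_def ker_delta1_def cochains1_def fS_def by auto
    then have fS': "fS \<in> fs.span (BTs \<union> BSs)" using BSs(3) fs.span_mono[of BSs "BTs \<union> BSs"] by blast
    have "f = fT + fS" by (auto simp: fT_def fS_def fun_eq_iff)
    then show "f \<in> fs.span (BTs \<union> BSs)" using fs.span_add[OF fT' fS'] by simp
  qed
  have "fs.dim KB = card (BTs \<union> BSs)"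
    using fs.basis_card_eq_dim[OF U_KB KB_U indU] by simp
  also have "\<dots> = card BTs + card BSs" using card_Un_disjoint[OF finBT finBS disj] .
  finally show ?thesis using cardBT BAs(4) BSs(4) unfolding KA_def KB_def KS_def by simp
qed

end

theorem proposition3p17:
  fixes n :: nat and E :: "'a set" and s t :: "'a \<Rightarrow> nat" and Z :: "'a list set"
  assumes mono: "monomial_data n E s t Z"
    and n2: "2 \<le> n"
    and nonisol1: "\<exists>a\<in>E. s a = 1 \<or> t a = 1"
    and nonisoln: "\<exists>a\<in>E. s a = n \<or> t a = n"
    and charcond: "\<And>\<alpha> m. \<alpha> \<in> E \<Longrightarrow> s \<alpha> = t \<alpha> \<Longrightarrow> s \<alpha> \<in> {1, n} \<Longrightarrow> 2 \<le> m \<Longrightarrow>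
                      replicate m \<alpha> \<in> Z \<Longrightarrow> \<not> CHAR('k::field) dvd m"
  shows "kdim (ker_delta1 {1..n-1} E (glue n \<circ> s) (glue n \<circ> t) (glued_Z n E s t Z)
               :: ('a \<times> 'a path \<Rightarrow> 'k) set)
         = kdim (ker_delta1 {1..n} E s t Z :: ('a \<times> 'a path \<Rightarrow> 'k) set)
           + kspp TYPE('k) n E s t Z"
proof -
  interpret G: gl n E s t Z by (rule gl.intro) (use mono n2 in auto)
  have ch: "chk TYPE('k) n E s t Z"
    unfolding chk_def using charcond of_nat_eq_0_iff_char_dvd by blast
  have sp: "{(\<lambda>x. if x = (\<alpha>, path_star n p) then 1 else 0) :: 'a \<times> 'a path \<Rightarrow> 'k
                  | \<alpha> p. special_pair n E s t Z \<alpha> p} = ind ` G.SP"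
    unfolding G.SP_def ind_def by blast
  show ?thesis unfolding kspp_def sp using G.dim_split[OF ch] by simp
qed

end
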